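(* Let $\mathcal{H}$ and $\mathcal{G}$ be Sperner hypergraphs on the same vertex set $V$ with $\mathcal{G}\subseteq Tr(\mathcal{H})$ and $\mathcal{H}\subseteq Tr(\mathcal{G})$, and let $k\in\mathbb{N}$. Consider the following procedure. (1) For each $k$-trace $(T,S)$ on $V$ with $(T,S)\notin\mathrm{traces}_k(\mathcal{H})$: if there exists $E\in Tr(\mathcal{G})$ realizing $(T,S)$, return such an $E$. (2) For each $E\in\mathrm{ext}_k(\mathcal{H})$ that is not contained in any hyperedge of $\mathcal{H}$: if $E\in Tr(\mathcal{G})$, return $E$. (3) Return "Yes". Then this procedure returns "Yes" if $Tr(\mathcal{G})=\mathcal{H}$, and otherwise returns a set $E\in Tr(\mathcal{G})\setminus\mathcal{H}$.
   Context: A hypergraph on $V$ is a family of subsets (hyperedges) of $V$; it is Sperner if no hyperedge contains another. A transversal meets every hyperedge; $Tr(\cdot)$ denotes the hypergraph of inclusion-minimal transversals. A $k$-trace on $V$ is a pair $(T,S)$ with $S\subseteq V$, $|S|=k$, $T\subseteq S$; a set $F$ realizes it if $F\cap S=T$. $\mathrm{traces}_k(F)$ is the set of $k$-traces realized by $F$, and $\mathrm{traces}_k(\mathcal{H})=\bigcup_{F\in\mathcal{H}}\mathrm{traces}_k(F)$. $\mathrm{ext}_k(\mathcal{H})$ is the hypergraph on $V$ consisting of all $E\subseteq V$ with $\mathrm{traces}_k(E)\subseteq\mathrm{traces}_k(\mathcal{H})$. *)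

theory Defs
  imports Main
begin

definition hypergraph_on :: "'a set \<Rightarrow> 'a set set \<Rightarrow> bool" where
  "hypergraph_on V H \<longleftrightarrow> (\<forall>E\<in>H. E \<subseteq> V)"

definition sperner :: "'a set set \<Rightarrow> bool" where
  "sperner H \<longleftrightarrow> (\<forall>A\<in>H. \<forall>B\<in>H. A \<subseteq> B \<longrightarrow> A = B)"

definition is_transversal :: "'a set \<Rightarrow> 'a set set \<Rightarrow> 'a set \<Rightarrow> bool" where
  "is_transversal V H T \<longleftrightarrow> T \<subseteq> V \<and> (\<forall>E\<in>H. T \<inter> E \<noteq> {})"

definition Tr :: "'a set \<Rightarrow> 'a set set \<Rightarrow> 'a set set" where
  "Tr V H = {T. is_transversal V H T \<and> (\<forall>T'. T' \<subset> T \<longrightarrow> \<not> is_transversal V H T')}"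

definition is_ktrace :: "'a set \<Rightarrow> nat \<Rightarrow> 'a set \<times> 'a set \<Rightarrow> bool" where
  "is_ktrace V k TS \<longleftrightarrow> (case TS of (T, S) \<Rightarrow> S \<subseteq> V \<and> finite S \<and> card S = k \<and> T \<subseteq> S)"

definition traces_set :: "'a set \<Rightarrow> nat \<Rightarrow> 'a set \<Rightarrow> ('a set \<times> 'a set) set" where
  "traces_set V k F = {(T, S). is_ktrace V k (T, S) \<and> F \<inter> S = T}"

definition traces :: "'a set \<Rightarrow> nat \<Rightarrow> 'a set set \<Rightarrow> ('a set \<times> 'a set) set" where
  "traces V k H = (\<Union>F\<in>H. traces_set V k F)"

definition ext :: "'a set \<Rightarrow> nat \<Rightarrow> 'a set set \<Rightarrow> 'a set set" where
  "ext V k H = {E. E \<subseteq> V \<and> traces_set V k E \<subseteq> traces V k H}"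

definition step1_cands :: "'a set \<Rightarrow> nat \<Rightarrow> 'a set set \<Rightarrow> 'a set set \<Rightarrow> 'a set set" where
  "step1_cands V k H G = {E \<in> Tr V G. \<exists>T S. is_ktrace V k (T, S) \<and> (T, S) \<notin> traces V k H \<and> E \<inter> S = T}"

definition step2_cands :: "'a set \<Rightarrow> nat \<Rightarrow> 'a set set \<Rightarrow> 'a set set \<Rightarrow> 'a set set" where
  "step2_cands V k H G = {E \<in> ext V k H. (\<forall>F\<in>H. \<not> E \<subseteq> F) \<and> E \<in> Tr V G}"

text \<open>All possible results of the (nondeterministic, order-dependent) procedure:
  None encodes "Yes", Some E encodes returning E.\<close>
definition procedure_outputs :: "'a set \<Rightarrow> nat \<Rightarrow> 'a set set \<Rightarrow> 'a set set \<Rightarrow> 'a set option set" where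
  "procedure_outputs V k H G =
     (if step1_cands V k H G \<noteq> {} then Some ` step1_cands V k H G
      else if step2_cands V k H G \<noteq> {} then Some ` step2_cands V k H G
      else {None})"

end

theory Submission
  imports Defs
begin

lemma some_case:
  assumes "Some E \<in> procedure_outputs V k H G"
  shows "E \<in> Tr V G - H"
proof -
  have "E \<in> step1_cands V k H G \<or> E \<in> step2_cands V k H G"
    using assms unfolding procedure_outputs_def by (auto split: if_splits)
  then show ?thesis
  proof
    assume "E \<in> step1_cands V k H G"
    then obtain T S where "E \<in> Tr V G" "is_ktrace V k (T, S)" "(T, S) \<notin> traces V k H" "E \<inter> S = T"
      unfolding step1_cands_def by blast
    moreover have "E \<notin> H"
    proof
      assume "E \<in> H"
      then have "(T, S) \<in> traces V k H" using calculation
        unfolding traces_def traces_set_def by blast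
      with calculation show False by blast
    qed
    ultimately show ?thesis by blast
  next
    assume "E \<in> step2_cands V k H G"
    then show ?thesis unfolding step2_cands_def by blast
  qed
qed

theorem theorem2:
  fixes V :: "'a set" and H G :: "'a set set" and k :: nat
  assumes "finite V"
    and "hypergraph_on V H" and "hypergraph_on V G"
    and "sperner H" and "sperner G"
    and "G \<subseteq> Tr V H" and "H \<subseteq> Tr V G"
    and "r \<in> procedure_outputs V k H G"
  shows "(r = None \<longleftrightarrow> Tr V G = H) \<and> (\<forall>E. r = Some E \<longrightarrow> E \<in> Tr V G - H)"
proof -
  have S: "\<forall>E. r = Some E \<longrightarrow> E \<in> Tr V G - H" using some_case assms(8) by blast
  have N: "Tr V G = H" if rN: "r = None"
  proof (rule ccontr)
    assume "Tr V G \<noteq> H"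
    with assms(7) obtain E where E: "E \<in> Tr V G" "E \<notin> H" by blast
    have e1: "step1_cands V k H G = {}" and e2: "step2_cands V k H G = {}"
      using assms(8) rN unfolding procedure_outputs_def by (auto split: if_splits)
    have EV: "E \<subseteq> V" using E unfolding Tr_def is_transversal_def by blast
    show False
    proof (cases "traces_set V k E \<subseteq> traces V k H")
      case True
      then have ext: "E \<in> ext V k H" using EV unfolding ext_def by blast
      have "\<forall>F\<in>H. \<not> E \<subseteq> F"
      proof (intro ballI notI)
        fix F assume F: "F \<in> H" "E \<subseteq> F"
        then have "F \<in> Tr V G" using assms(7) by blast
        moreover have "is_transversal V G E" using E(1) unfolding Tr_def by blast
        ultimately have "E = F" using F(2) unfolding Tr_def by blast
        with F E show False by blast
      qed
      then have "E \<in> step2_cands V k H G" using ext E unfolding step2_cands_def by blast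
      with e2 show False by blast
    next
      case False
      then obtain T S where "(T, S) \<in> traces_set V k E" "(T, S) \<notin> traces V k H" by auto
      then have "E \<in> step1_cands V k H G" using E
        unfolding step1_cands_def traces_set_def by blast
      with e1 show False by blast
    qed
  qed
  have "r = None" if "Tr V G = H"
  proof (cases r)
    case (Some E) then show ?thesis using S that by blast
  qed
  with N S show ?thesis by blast
qed

end
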